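(* Let $d\in\mathbb N_+$. If $f\in\bigcap_{{\bf m}\in\mathbb N_+^d}W_2^{\bf m}(\mathbb T^d)$ satisfies $\sup_{{\bf m}\in\mathbb N_+^d}\|f|W_2^{\bf m}(\mathbb T^d)\|<\infty$, then $\hat f({\bf k})=0$ for every ${\bf k}\in\mathbb Z^d$ with $|k_i|\ge2$ for some $i$, and $\sup_{{\bf m}\in\mathbb N_+^d}\|f|W_2^{\bf m}(\mathbb T^d)\|^2=\sum_{{\bf k}\in\{-1,0,1\}^d}(1+\sum_{j=1}^d|k_j|)|\hat f({\bf k})|^2$. Consequently the space $W_2^\infty(\mathbb T^d)$ of all such $f$ is a Hilbert space of dimension $3^d$.
   Context: $\mathbb T^d$ carries the normalized Lebesgue measure and $\hat f({\bf k})=(2\pi)^{-d}\int_{\mathbb T^d}f({\bf x})e^{-i{\bf k}\cdot{\bf x}}d{\bf x}$. For ${\bf m}\in\mathbb N_+^d$, $W_2^{\bf m}(\mathbb T^d)$ is the space of $f\in L_2(\mathbb T^d)$ with finite norm $\|f|W_2^{\bf m}(\mathbb T^d)\|=\big(\sum_{{\bf k}\in\mathbb Z^d}(1+\sum_{j=1}^d|k_j|^{2m_j})|\hat f({\bf k})|^2\big)^{1/2}$. *)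

theory Defs
  imports "HOL-Analysis.Analysis"
begin

text \<open>The torus T^d is represented by the fundamental cube [0, 2 pi]^d in real^'d,
  where the dimension d = CARD('d) is given by a finite index type 'd.
  Functions on T^d are functions real^'d => complex (only their values on the cube matter).\<close>

definition torus :: "(real^'d::finite) set" where
  "torus = cbox 0 (\<chi> i. 2 * pi)"

definition dotk :: "int^'d::finite \<Rightarrow> real^'d \<Rightarrow> real" where
  "dotk k x = (\<Sum>j\<in>UNIV. of_int (k $ j) * x $ j)"

definition L2T :: "(real^'d::finite \<Rightarrow> complex) \<Rightarrow> bool" where
  "L2T f \<longleftrightarrow> f \<in> borel_measurable (lebesgue_on torus) \<and>
     integrable (lebesgue_on torus) (\<lambda>x. (cmod (f x))^2)"

definition fourier :: "(real^'d::finite \<Rightarrow> complex) \<Rightarrow> int^'d \<Rightarrow> complex" where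
  "fourier f k = complex_of_real (1 / (2 * pi) ^ CARD('d)) *
     (LINT x|lebesgue_on torus. f x * exp (- \<i> * complex_of_real (dotk k x)))"

definition sob_weight :: "nat^'d::finite \<Rightarrow> int^'d \<Rightarrow> real" where
  "sob_weight m k = 1 + (\<Sum>j\<in>UNIV. \<bar>real_of_int (k $ j)\<bar> ^ (2 * m $ j))"

definition posidx :: "(nat^'d::finite) set" where
  "posidx = {m. \<forall>j. m $ j \<ge> 1}"

definition inW2 :: "nat^'d::finite \<Rightarrow> (real^'d \<Rightarrow> complex) \<Rightarrow> bool" where
  "inW2 m f \<longleftrightarrow> L2T f \<and> (\<lambda>k. sob_weight m k * (cmod (fourier f k))^2) summable_on UNIV"

definition sob_norm :: "nat^'d::finite \<Rightarrow> (real^'d \<Rightarrow> complex) \<Rightarrow> real" where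
  "sob_norm m f = sqrt (\<Sum>\<^sub>\<infinity>k. sob_weight m k * (cmod (fourier f k))^2)"

definition inW2inf :: "(real^'d::finite \<Rightarrow> complex) \<Rightarrow> bool" where
  "inW2inf f \<longleftrightarrow> (\<forall>m\<in>(posidx :: (nat^'d) set). inW2 m f) \<and>
     bdd_above ((\<lambda>m. sob_norm m f) ` (posidx :: (nat^'d) set))"

definition lowfreq :: "(int^'d::finite) set" where
  "lowfreq = {k. \<forall>j. \<bar>k $ j\<bar> \<le> 1}"

end

theory Submission
  imports Defs
begin

definition ee :: "int^'d::finite \<Rightarrow> real^'d \<Rightarrow> complex" where
  "ee k x = exp (\<i> * complex_of_real (dotk k x))"

abbreviation TT where "TT \<equiv> lebesgue_on (torus :: (real^'d::finite) set)"

lemma dotk_add: "dotk (k + l) x = dotk k x + dotk l x"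
  by (simp add: dotk_def sum.distrib algebra_simps)
lemma dotk_uminus: "dotk (- k) x = - dotk k x"
  by (simp add: dotk_def sum_negf)
lemma dotk_zero[simp]: "dotk 0 x = 0"
  by (simp add: dotk_def)
lemma dotk_axis: "dotk (axis j 1) x = x $ j"
proof -
  have "dotk (axis j 1) x = (\<Sum>i\<in>UNIV. if i = j then x $ j else 0)"
    unfolding dotk_def by (intro sum.cong) (auto simp: axis_def)
  then show ?thesis by simp
qed
lemma continuous_dotk[continuous_intros]: "continuous_on S (dotk k)"
  unfolding dotk_def by (intro continuous_intros)

lemma ee_add: "ee (k + l) x = ee k x * ee l x"
  by (simp add: ee_def dotk_add distrib_left exp_add)
lemma ee_zero[simp]: "ee 0 x = 1"
  by (simp add: ee_def)
lemma norm_ee[simp]: "norm (ee k x) = 1"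
  by (simp add: ee_def)
lemma continuous_ee[continuous_intros]: "continuous_on S (ee k)"
  unfolding ee_def by (intro continuous_intros)
lemma fourier_ee: "fourier f k = complex_of_real (1 / (2 * pi) ^ CARD('d)) *
     (LINT x|TT. f x * ee (- k) x)" for f :: "real^'d::finite \<Rightarrow> complex"
  by (simp add: fourier_def ee_def dotk_uminus)

lemma torus_lmeas: "torus \<in> lmeasurable"
  by (simp add: torus_def)
lemma torus_sets[simp]: "torus \<in> sets lebesgue"
  by (metis fmeasurableD torus_lmeas)
lemma fin_TT: "finite_measure TT"
  by (rule finite_measure_lebesgue_on[OF torus_lmeas])

lemma meas_TT: "f \<in> borel_measurable borel \<Longrightarrow> f \<in> borel_measurable (lebesgue_on S)"
  by (simp add: measurable_completion measurable_restrict_space1)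
lemma meas_TT_cont: "continuous_on UNIV f \<Longrightarrow> f \<in> borel_measurable (lebesgue_on S)"
  by (intro meas_TT borel_measurable_continuous_onI)

lemma L2T_integrable: assumes "L2T f" shows "integrable TT f"
proof (rule Bochner_Integration.integrable_bound[where f="\<lambda>x. 1 + (cmod (f x))^2"])
  show "integrable TT (\<lambda>x. 1 + (cmod (f x))^2)"
  proof -
    interpret finite_measure TT by (rule fin_TT)
    have "integrable TT (\<lambda>x. (cmod (f x))^2)" using assms unfolding L2T_def by blast
    then show ?thesis by (intro Bochner_Integration.integrable_add integrable_const)
  qed
  show "f \<in> borel_measurable TT" using assms by (simp add: L2T_def)
  show "AE x in TT. norm (f x) \<le> norm (1 + (cmod (f x))^2)"
  proof (intro AE_I2)
    fix x
    have "cmod (f x) \<le> 1 + (cmod (f x))^2"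
    proof (cases "cmod (f x) \<le> 1")
      case True then show ?thesis by (smt (verit) zero_le_power2)
    next
      case False then have "cmod (f x) * 1 \<le> cmod (f x) * cmod (f x)"
        by (intro mult_left_mono) auto
      then show ?thesis by (simp add: power2_eq_square)
    qed
    then show "norm (f x) \<le> norm (1 + (cmod (f x))^2)" by simp
  qed
qed

lemma integrable_bdd_mult: assumes "integrable TT f" "g \<in> borel_measurable TT" "\<And>x. norm (g x) \<le> B"
  shows "integrable TT (\<lambda>x. f x * g x :: complex)"
proof (rule Bochner_Integration.integrable_bound[where f="\<lambda>x. B * norm (f x)"])
  show "integrable TT (\<lambda>x. B * norm (f x))" by (intro integrable_mult_right integrable_norm assms(1))
  show "(\<lambda>x. f x * g x) \<in> borel_measurable TT" using assms borel_measurable_integrable by (intro borel_measurable_times) blast+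
  show "AE x in TT. norm (f x * g x) \<le> norm (B * norm (f x))"
  proof (intro AE_I2)
    fix x
    have "0 \<le> B" using assms(3)[of x] norm_ge_zero order_trans by blast
    then have "norm (f x * g x) \<le> B * norm (f x)"
      unfolding norm_mult by (metis assms(3) mult.commute mult_left_mono norm_ge_zero)
    then show "norm (f x * g x) \<le> norm (B * norm (f x))" by simp
  qed
qed

lemma integrable_ee: "integrable TT f \<Longrightarrow> integrable TT (\<lambda>x. f x * ee k x)"
  by (rule integrable_bdd_mult[where B=1]) (auto intro: meas_TT_cont continuous_ee)


lemma integral_lborel_prod:
  fixes f :: "'a::euclidean_space \<Rightarrow> real \<Rightarrow> complex"
  assumes [measurable]: "\<And>b. b \<in> Basis \<Longrightarrow> f b \<in> borel_measurable borel"
  assumes int: "\<And>b. b \<in> Basis \<Longrightarrow> integrable lborel (f b)"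
  shows "(\<integral>x. (\<Prod>b\<in>Basis. f b (x \<bullet> b)) \<partial>lborel) = (\<Prod>b\<in>Basis. integral\<^sup>L lborel (f b))"
proof -
  interpret product_sigma_finite "\<lambda>_. lborel"
    by unfold_locales
  have "(\<integral>x. (\<Prod>b\<in>Basis. f b (x \<bullet> b)) \<partial>lborel) =
     (\<integral>x. (\<Prod>b\<in>Basis. f b ((\<Sum>b'\<in>Basis. x b' *\<^sub>R b') \<bullet> b)) \<partial>(\<Pi>\<^sub>M b\<in>Basis. lborel))"
    by (subst lborel_eq) (simp add: integral_distr)
  also have "\<dots> = (\<integral>x. (\<Prod>b\<in>Basis. f b (x b)) \<partial>(\<Pi>\<^sub>M b\<in>Basis. lborel))"
    by (intro Bochner_Integration.integral_cong refl prod.cong)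
       (simp_all add: inner_sum_left inner_Basis if_distrib cong: if_cong)
  also have "\<dots> = (\<Prod>b\<in>Basis. integral\<^sup>L lborel (f b))"
    by (rule product_integral_prod) (auto intro: int)
  finally show ?thesis .
qed

lemma integral_1d:
  fixes n :: int
  shows "(LBINT t. indicator {0..2*pi} t *\<^sub>R exp (t *\<^sub>R (\<i> * of_int n))) = (if n = 0 then 2 * pi else 0)"
proof (cases "n = 0")
  case True
  have "(LBINT t. indicator {0..2*pi} t *\<^sub>R exp (t *\<^sub>R (\<i> * of_int n))) =
        (LBINT t. indicator {0..2*pi} t *\<^sub>R (1::complex))"
    using True by simp
  also have "\<dots> = of_real (2*pi) - of_real 0"
    by (rule integral_FTC_atLeastAtMost) (auto intro!: derivative_eq_intros)
  finally show ?thesis using True by simp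
next
  case False
  let ?A = "\<i> * of_int n :: complex"
  have A: "?A \<noteq> 0" using False by simp
  have "(LBINT t. indicator {0..2*pi} t *\<^sub>R exp (t *\<^sub>R ?A)) =
        exp ((2*pi) *\<^sub>R ?A) / ?A - exp (0 *\<^sub>R ?A) / ?A"
  proof (rule integral_FTC_atLeastAtMost)
    fix x assume "0 \<le> x" "x \<le> 2*pi"
    show "((\<lambda>t. exp (t *\<^sub>R ?A) / ?A) has_vector_derivative exp (x *\<^sub>R ?A)) (at x within {0..2*pi})"
      using has_vector_derivative_divide[OF exp_scaleR_has_vector_derivative_right[of ?A x "{0..2*pi}"], of ?A] A
      by simp
  next
    show "continuous_on {0..2*pi} (\<lambda>t. exp (t *\<^sub>R ?A))"
      by (intro continuous_intros)
  qed simp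
  also have "exp ((2*pi) *\<^sub>R ?A) = 1"
  proof -
    have "(2*pi) *\<^sub>R ?A = 2 * pi * of_int n * \<i>" by (simp add: scaleR_conv_of_real)
    then show ?thesis by (simp add: exp_eq_1)
  qed
  finally show ?thesis using False by simp
qed


lemma Basis_cart_range: "(Basis :: (real^'n) set) = range (\<lambda>j. axis j 1)"
  by (auto simp: Basis_vec_def)

lemma prod_Basis_cart: "(\<Prod>b\<in>(Basis::(real^'n) set). g b) = (\<Prod>j\<in>UNIV. g (axis j 1))"
proof -
  have "inj (\<lambda>j::'n. axis j (1::real))" by (auto intro: injI simp: axis_eq_axis)
  then show ?thesis unfolding Basis_cart_range by (simp add: prod.reindex)
qed

lemma integral_TT_lborel:
  fixes g :: "real^'d::finite \<Rightarrow> complex"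
  assumes "g \<in> borel_measurable borel"
  shows "(LINT x|TT. g x) = (LINT x|lborel. indicator torus x *\<^sub>R g x)"
proof -
  have "(LINT x|TT. g x) = (LINT x|lebesgue. indicator torus x *\<^sub>R g x)"
    by (rule integral_restrict_space) simp
  also have "\<dots> = (LINT x|lborel. indicator torus x *\<^sub>R g x)"
    by (rule integral_completion) (use assms in \<open>simp add: torus_def\<close>)
  finally show ?thesis .
qed

lemma int_ee: "(LINT x|TT. ee n x) = (if n = 0 then (2*pi)^CARD('d) else 0)"
  for n :: "int^'d::finite"
proof -
  define F where "F b t = indicator {0..2*pi} t *\<^sub>R exp (t *\<^sub>R (\<i> * of_int (n $ axis_index b)))"
    for b :: "real^'d" and t :: real
  have meas: "ee n \<in> borel_measurable borel"
    by (intro borel_measurable_continuous_onI continuous_ee)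
  have eq: "indicator torus x *\<^sub>R ee n x = (\<Prod>b\<in>Basis. F b (x \<bullet> b))" for x
  proof -
    have "(\<Prod>b\<in>Basis. F b (x \<bullet> b)) = (\<Prod>j\<in>UNIV. F (axis j 1) (x $ j))"
      by (simp add: prod_Basis_cart inner_axis)
    also have "\<dots> = (\<Prod>j\<in>UNIV. complex_of_real (indicator {0..2*pi} (x$j)) *
                   exp (\<i> * complex_of_real (of_int (n $ j) * x $ j)))"
      by (intro prod.cong refl) (simp add: F_def scaleR_conv_of_real mult_ac)
    also have "\<dots> = complex_of_real (\<Prod>j\<in>UNIV. indicator {0..2*pi} (x$j)) *
                    exp (\<Sum>j\<in>UNIV. \<i> * complex_of_real (of_int (n $ j) * x $ j))"
      by (simp add: prod.distrib exp_sum)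
    also have "(\<Prod>j\<in>UNIV. indicator {0..2*pi} (x$j) :: real) = indicator torus x"
    proof (cases "x \<in> torus")
      case True
      then show ?thesis by (auto simp: torus_def mem_box_cart indicator_def)
    next
      case False
      then obtain j where "x $ j \<notin> {0..2*pi}" by (auto simp: torus_def mem_box_cart)
      then show ?thesis using False by (auto simp: indicator_def intro!: prod_zero)
    qed
    also have "(\<Sum>j\<in>UNIV. \<i> * complex_of_real (of_int (n $ j) * x $ j)) = \<i> * complex_of_real (dotk n x)"
      by (simp add: dotk_def sum_distrib_left)
    finally show ?thesis by (simp add: ee_def scaleR_conv_of_real)
  qed
  have "(LINT x|TT. ee n x) = (LINT x|lborel. (\<Prod>b\<in>Basis. F b (x \<bullet> b)))"
    by (simp only: integral_TT_lborel[OF meas] eq)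
  also have "\<dots> = (\<Prod>b\<in>Basis. integral\<^sup>L lborel (F b))"
  proof (rule integral_lborel_prod)
    fix b :: "real^'d"
    have c: "continuous_on UNIV (\<lambda>t. exp (t *\<^sub>R (\<i> * complex_of_int (n $ axis_index b))))"
      by (intro continuous_intros)
    have "(\<lambda>t. indicator {0..2*pi} t *\<^sub>R exp (t *\<^sub>R (\<i> * complex_of_int (n $ axis_index b)))) \<in> borel_measurable borel"
      by (rule borel_measurable_scaleR[OF borel_measurable_indicator borel_measurable_continuous_onI[OF c]]) simp
    then show "F b \<in> borel_measurable borel" unfolding F_def[abs_def] .
    have "set_integrable lborel {0..2*pi} (\<lambda>t. exp (t *\<^sub>R (\<i> * complex_of_int (n $ axis_index b))))"
      by (rule borel_integrable_atLeastAtMost'[OF continuous_on_subset[OF c]]) simp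
    then show "integrable lborel (F b)"
      unfolding F_def[abs_def] set_integrable_def .
  qed
  also have "\<dots> = (\<Prod>j\<in>UNIV. if n $ j = 0 then complex_of_real (2*pi) else 0)"
  proof -
    have Fint: "integral\<^sup>L lborel (F b) = (if n $ axis_index b = 0 then complex_of_real (2*pi) else 0)" for b
      unfolding F_def using integral_1d[of "n $ axis_index b"] by simp
    show ?thesis by (simp only: prod_Basis_cart Fint axis_index_axis)
  qed
  also have "\<dots> = (if n = 0 then (2*pi)^CARD('d) else 0)"
  proof (cases "n = 0")
    case True then show ?thesis by simp
  next
    case False
    then obtain j where "n $ j \<noteq> 0" by (metis vec_eq_iff zero_index)
    then show ?thesis using False by (auto intro!: prod_zero)
  qed
  finally show ?thesis .
qed


definition LF :: "(real^'d::finite \<Rightarrow> complex) \<Rightarrow> bool" where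
  "LF f \<longleftrightarrow> (\<forall>k. k \<notin> (lowfreq :: (int^'d) set) \<longrightarrow> fourier f k = 0)"

lemma not_lowfreq_iff: "k \<notin> lowfreq \<longleftrightarrow> (\<exists>i. \<bar>k $ i\<bar> \<ge> 2)"
proof -
  have *: "\<And>x::int. (\<not> \<bar>x\<bar> \<le> 1) = (\<bar>x\<bar> \<ge> 2)" by arith
  show ?thesis by (auto simp: lowfreq_def *)
qed

lemma lowfreq_bij: "bij_betw vec_nth (lowfreq :: (int^'d::finite) set) (Pi\<^sub>E UNIV (\<lambda>_. {-1..1}))"
proof (rule bij_betwI')
  show "\<And>x y. x \<in> lowfreq \<Longrightarrow> y \<in> lowfreq \<Longrightarrow> (vec_nth x = vec_nth y) = (x = y)"
    by (simp add: vec_nth_inject)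
  show "\<And>x. x \<in> lowfreq \<Longrightarrow> vec_nth x \<in> Pi\<^sub>E UNIV (\<lambda>_. {-1..1::int})"
    by (auto simp: lowfreq_def abs_le_iff)
  show "\<exists>x\<in>lowfreq. y = vec_nth x" if "y \<in> Pi\<^sub>E UNIV (\<lambda>_. {-1..1::int})" for y
    using that by (intro bexI[of _ "vec_lambda y"]) (auto simp: lowfreq_def abs_le_iff)
qed

lemma card_lowfreq: "card (lowfreq :: (int^'d::finite) set) = 3 ^ CARD('d)"
proof -
  have "card (lowfreq :: (int^'d) set) = card (Pi\<^sub>E (UNIV::'d set) (\<lambda>_. {-1..1::int}))"
    by (rule bij_betw_same_card[OF lowfreq_bij])
  also have "\<dots> = 3 ^ CARD('d)" by (simp add: card_PiE)
  finally show ?thesis .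
qed

lemma finite_lowfreq[simp]: "finite (lowfreq :: (int^'d::finite) set)"
  using card_lowfreq[where 'd='d] by (metis card_eq_0_iff power_not_zero zero_neq_numeral)

lemma sob_weight_low:
  assumes "m \<in> posidx" "k \<in> lowfreq"
  shows "sob_weight m k = 1 + (\<Sum>j\<in>UNIV. real_of_int \<bar>k $ j\<bar>)"
  unfolding sob_weight_def
proof (intro arg_cong[where f="\<lambda>x. 1 + x"] sum.cong refl)
  fix j
  have m: "m $ j \<ge> 1" using assms(1) by (simp add: posidx_def)
  have "\<bar>k $ j\<bar> \<le> 1" using assms(2) by (simp add: lowfreq_def)
  then have "\<bar>k $ j\<bar> = 0 \<or> \<bar>k $ j\<bar> = 1" by auto
  then show "\<bar>real_of_int (k $ j)\<bar> ^ (2 * m $ j) = real_of_int \<bar>k $ j\<bar>"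
  proof
    assume "\<bar>k $ j\<bar> = 0" then show ?thesis using m by simp
  next
    assume "\<bar>k $ j\<bar> = 1"
    then have "\<bar>real_of_int (k $ j)\<bar> = 1" by (metis of_int_1 of_int_abs)
    then show ?thesis using \<open>\<bar>k $ j\<bar> = 1\<close> by simp
  qed
qed

definition Sq :: "(real^'d::finite \<Rightarrow> complex) \<Rightarrow> real" where
  "Sq f = (\<Sum>k\<in>(lowfreq :: (int^'d) set). (1 + (\<Sum>j\<in>UNIV. real_of_int \<bar>k $ j\<bar>)) * (cmod (fourier f k))^2)"

lemma Sq_nonneg: "0 \<le> Sq f"
  unfolding Sq_def by (intro sum_nonneg mult_nonneg_nonneg) (auto intro: sum_nonneg)

lemma LF_summable:
  assumes "LF f" shows "(\<lambda>k. sob_weight m k * (cmod (fourier f k))^2) summable_on UNIV"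
proof -
  have "(\<lambda>k. sob_weight m k * (cmod (fourier f k))^2) summable_on lowfreq"
    by (rule summable_on_finite) simp
  then show ?thesis
    by (subst (asm) summable_on_cong_neutral[where T=UNIV and g="\<lambda>k. sob_weight m k * (cmod (fourier f k))^2"])
       (use assms in \<open>auto simp: LF_def\<close>)
qed

lemma LF_sob_norm:
  assumes "LF f" "m \<in> posidx" shows "sob_norm m f = sqrt (Sq f)"
proof -
  have "(\<Sum>\<^sub>\<infinity>k. sob_weight m k * (cmod (fourier f k))^2) =
        (\<Sum>\<^sub>\<infinity>k\<in>lowfreq. sob_weight m k * (cmod (fourier f k))^2)"
    by (rule infsum_cong_neutral) (use assms in \<open>auto simp: LF_def\<close>)
  also have "\<dots> = Sq f"
    by (simp add: infsum_finite Sq_def sob_weight_low[OF assms(2)])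
  finally show ?thesis by (simp add: sob_norm_def)
qed

lemma posidx_ne: "(\<chi> j. 1) \<in> (posidx :: (nat^'d::finite) set)"
  by (simp add: posidx_def)

lemma LF_inW2inf:
  assumes "L2T f" "LF f" shows "inW2inf f"
  unfolding inW2inf_def inW2_def
proof (intro conjI ballI)
  show "L2T f" for m by fact
  show "(\<lambda>k. sob_weight m k * (cmod (fourier f k))^2) summable_on UNIV" for m
    using LF_summable[OF assms(2)] .
  show "bdd_above ((\<lambda>m. sob_norm m f) ` posidx)"
    by (rule bdd_aboveI[where M="sqrt (Sq f)"]) (use LF_sob_norm[OF assms(2)] in auto)
qed

lemma inW2inf_LF:
  fixes f :: "real^'d::finite \<Rightarrow> complex"
  assumes "inW2inf f" shows "LF f"
  unfolding LF_def
proof (intro allI impI)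
  fix k :: "int^'d" assume "k \<notin> lowfreq"
  then obtain i where ki: "\<bar>k $ i\<bar> \<ge> 2" by (auto simp: not_lowfreq_iff)
  from assms obtain B where B: "\<And>m. m \<in> posidx \<Longrightarrow> sob_norm m f \<le> B"
    unfolding inW2inf_def bdd_above_def by auto
  define c where "c = (cmod (fourier f k))^2"
  have c0: "c \<ge> 0" by (simp add: c_def)
  have bound: "real M * c \<le> B^2" if "M \<ge> 1" for M :: nat
  proof -
    define m :: "nat^'d" where "m = (\<chi> j. M)"
    have mp: "m \<in> posidx" using that by (simp add: posidx_def m_def)
    have summ: "(\<lambda>k. sob_weight m k * (cmod (fourier f k))^2) summable_on UNIV"
      using assms mp by (simp add: inW2inf_def inW2_def)
    have wnn: "0 \<le> sob_weight m k'" for k'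
      unfolding sob_weight_def by (intro add_nonneg_nonneg sum_nonneg) auto
    have "sob_weight m k * c = (\<Sum>\<^sub>\<infinity>k'\<in>{k}. sob_weight m k' * (cmod (fourier f k'))^2)"
      by (simp add: c_def)
    also have "\<dots> \<le> (\<Sum>\<^sub>\<infinity>k'. sob_weight m k' * (cmod (fourier f k'))^2)"
      by (rule infsum_mono_neutral) (use summ wnn in auto)
    also have "\<dots> = (sob_norm m f)^2"
      unfolding sob_norm_def
      by (subst real_sqrt_pow2) (auto intro!: infsum_nonneg mult_nonneg_nonneg wnn)
    also have "\<dots> \<le> B^2"
      using B[OF mp] by (intro power_mono) (auto simp: sob_norm_def intro!: infsum_nonneg mult_nonneg_nonneg wnn)
    finally have 1: "sob_weight m k * c \<le> B^2" .
    have "real M \<le> 2 ^ M" using less_exp[of M] by (metis less_imp_le of_nat_le_iff of_nat_numeral of_nat_power)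
    also have "(2::real) ^ M \<le> 2 ^ (2 * M)" by (intro power_increasing) auto
    also have "(2::real) ^ (2 * M) \<le> \<bar>real_of_int (k $ i)\<bar> ^ (2 * m $ i)"
      using ki by (simp add: m_def) (intro power_mono, linarith, simp)
    also have "\<dots> \<le> sob_weight m k"
    proof -
      have "\<bar>real_of_int (k $ i)\<bar> ^ (2 * m $ i) \<le> (\<Sum>j\<in>UNIV. \<bar>real_of_int (k $ j)\<bar> ^ (2 * m $ j))"
        by (rule member_le_sum) auto
      then show ?thesis unfolding sob_weight_def by linarith
    qed
    finally have "real M * c \<le> sob_weight m k * c" using c0 by (intro mult_right_mono)
    then show ?thesis using 1 by linarith
  qed
  have "c = 0"
  proof (rule ccontr)
    assume "c \<noteq> 0"
    then have cp: "c > 0" using c0 by simp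
    define M where "M = nat \<lceil>B^2 / c\<rceil> + 1"
    have "B^2 / c < real M" unfolding M_def by linarith
    then have "B^2 < real M * c" using cp by (simp add: field_simps)
    with bound[of M] show False by (simp add: M_def)
  qed
  then show "fourier f k = 0" by (simp add: c_def)
qed


lemma L2T_meas: "L2T f \<Longrightarrow> f \<in> borel_measurable TT"
  by (simp add: L2T_def)

lemma fourier_add:
  assumes "integrable TT f" "integrable TT g"
  shows "fourier (\<lambda>x. f x + g x) k = fourier f k + fourier g k"
proof -
  have "(LINT x|TT. (f x + g x) * ee (-k) x) = (LINT x|TT. f x * ee (-k) x) + (LINT x|TT. g x * ee (-k) x)"
    unfolding distrib_right by (intro Bochner_Integration.integral_add integrable_ee assms)
  then show ?thesis by (simp add: fourier_ee distrib_left)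
qed

lemma fourier_diff:
  assumes "integrable TT f" "integrable TT g"
  shows "fourier (\<lambda>x. f x - g x) k = fourier f k - fourier g k"
proof -
  have "(LINT x|TT. (f x - g x) * ee (-k) x) = (LINT x|TT. f x * ee (-k) x) - (LINT x|TT. g x * ee (-k) x)"
    unfolding left_diff_distrib by (intro Bochner_Integration.integral_diff integrable_ee assms)
  then show ?thesis by (simp add: fourier_ee right_diff_distrib)
qed

lemma fourier_cmult: "fourier (\<lambda>x. c * f x) k = c * fourier f k"
proof -
  have "(LINT x|TT. (c * f x) * ee (-k) x) = c * (LINT x|TT. f x * ee (-k) x)"
    by (simp add: mult.assoc)
  then show ?thesis by (simp add: fourier_ee)
qed

lemma L2T_add:
  assumes "L2T f" "L2T g" shows "L2T (\<lambda>x. f x + g x)"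
  unfolding L2T_def
proof
  have mf: "f \<in> borel_measurable TT" "g \<in> borel_measurable TT" using assms by (auto simp: L2T_def)
  then show m: "(\<lambda>x. f x + g x) \<in> borel_measurable TT" by (intro borel_measurable_add)
  show "integrable TT (\<lambda>x. (cmod (f x + g x))^2)"
  proof (rule Bochner_Integration.integrable_bound[where f="\<lambda>x. 2 * (cmod (f x))^2 + 2 * (cmod (g x))^2"])
    show "integrable TT (\<lambda>x. 2 * (cmod (f x))^2 + 2 * (cmod (g x))^2)"
      using assms unfolding L2T_def by (intro Bochner_Integration.integrable_add integrable_mult_right) auto
    show "(\<lambda>x. (cmod (f x + g x))^2) \<in> borel_measurable TT"
      using m by measurable
    show "AE x in TT. norm ((cmod (f x + g x))^2) \<le> norm (2 * (cmod (f x))^2 + 2 * (cmod (g x))^2)"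
    proof (intro AE_I2)
      fix x
      have t: "cmod (f x + g x) \<le> cmod (f x) + cmod (g x)" by (rule norm_triangle_ineq)
      have "(cmod (f x + g x))^2 \<le> (cmod (f x) + cmod (g x))^2"
        using t by (intro power_mono) auto
      also have "\<dots> \<le> 2 * (cmod (f x))^2 + 2 * (cmod (g x))^2"
        by (smt (verit, best) power2_diff power2_sum zero_le_power2)
      finally show "norm ((cmod (f x + g x))^2) \<le> norm (2 * (cmod (f x))^2 + 2 * (cmod (g x))^2)"
        by simp
    qed
  qed
qed

lemma L2T_cmult:
  assumes "L2T f" shows "L2T (\<lambda>x. c * f x)"
  unfolding L2T_def
proof
  show "(\<lambda>x. c * f x) \<in> borel_measurable TT" using assms
    by (intro borel_measurable_times borel_measurable_const) (auto simp: L2T_def)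
  have "integrable TT (\<lambda>x. (cmod c)^2 * (cmod (f x))^2)"
    using assms unfolding L2T_def by (intro integrable_mult_right) auto
  then show "integrable TT (\<lambda>x. (cmod (c * f x))^2)"
    by (simp add: norm_mult power_mult_distrib)
qed

lemma inW2inf_L2T: "inW2inf f \<Longrightarrow> L2T f"
  using posidx_ne by (auto simp: inW2inf_def inW2_def)

lemma inW2inf_add:
  assumes "inW2inf f" "inW2inf g" shows "inW2inf (\<lambda>x. f x + g x)"
proof (rule LF_inW2inf)
  have L: "L2T f" "L2T g" using assms inW2inf_L2T by auto
  then show "L2T (\<lambda>x. f x + g x)" by (rule L2T_add)
  show "LF (\<lambda>x. f x + g x)"
    using inW2inf_LF[OF assms(1)] inW2inf_LF[OF assms(2)]
    by (simp add: LF_def fourier_add L2T_integrable L)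
qed

lemma inW2inf_cmult:
  assumes "inW2inf f" shows "inW2inf (\<lambda>x. c * f x)"
proof (rule LF_inW2inf)
  show "L2T (\<lambda>x. c * f x)" using assms inW2inf_L2T L2T_cmult by blast
  show "LF (\<lambda>x. c * f x)"
    using inW2inf_LF[OF assms] by (simp add: LF_def fourier_cmult)
qed

lemma fourier_AE:
  assumes "L2T f" "L2T g" "AE x in TT. f x = g x"
  shows "fourier f k = fourier g k"
proof -
  have "(LINT x|TT. f x * ee (-k) x) = (LINT x|TT. g x * ee (-k) x)"
  proof (rule integral_cong_AE)
    show "(\<lambda>x. f x * ee (-k) x) \<in> borel_measurable TT" "(\<lambda>x. g x * ee (-k) x) \<in> borel_measurable TT"
      using assms by (auto intro!: borel_measurable_times[OF _ meas_TT_cont[OF continuous_ee]] simp: L2T_def)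
    show "AE x in TT. f x * ee (-k) x = g x * ee (-k) x" using assms(3) by eventually_elim simp
  qed
  then show ?thesis by (simp add: fourier_ee)
qed

lemma integrable_ee1: "integrable TT (ee k)"
proof -
  have "integrable TT (\<lambda>_. 1::complex)" using finite_measure.integrable_const[OF fin_TT] .
  from integrable_ee[OF this, of k] show ?thesis by simp
qed

lemma trig_exists:
  fixes a :: "int^'d::finite \<Rightarrow> complex"
  shows "\<exists>f. inW2inf f \<and> (\<forall>k\<in>lowfreq. fourier f k = a k)"
proof -
  define f where "f x = (\<Sum>l\<in>lowfreq. a l * ee l x)" for x :: "real^'d"
  have cont: "continuous_on UNIV f" unfolding f_def by (intro continuous_intros)
  have four: "fourier f k = (if k \<in> lowfreq then a k else 0)" for k
  proof -
    have "(LINT x|TT. f x * ee (-k) x) = (LINT x|TT. (\<Sum>l\<in>lowfreq. a l * ee (l + - k) x))"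
      unfolding f_def sum_distrib_right by (simp only: ee_add mult.assoc)
    also have "\<dots> = (\<Sum>l\<in>lowfreq. a l * (LINT x|TT. ee (l + - k) x))"
      by (subst Bochner_Integration.integral_sum) (auto intro: integrable_ee1)
    also have "\<dots> = (\<Sum>l\<in>lowfreq. if l = k then a l * (2*pi)^CARD('d) else 0)"
      by (intro sum.cong refl) (simp add: int_ee)
    also have "\<dots> = (if k \<in> lowfreq then a k * (2*pi)^CARD('d) else 0)"
      by (simp add: sum.delta')
    finally show ?thesis by (simp add: fourier_ee)
  qed
  have L: "L2T f"
    unfolding L2T_def
  proof
    show "f \<in> borel_measurable TT" by (rule meas_TT_cont[OF cont])
    have "continuous_on torus (\<lambda>x. (cmod (f x))^2)"
      by (intro continuous_intros continuous_on_subset[OF cont]) auto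
    then show "integrable TT (\<lambda>x. (cmod (f x))^2)"
      unfolding torus_def by (rule continuous_imp_integrable)
  qed
  have "inW2inf f"
    by (rule LF_inW2inf[OF L]) (simp add: LF_def four)
  then show ?thesis using four by auto
qed


inductive_set TP :: "(real^'d::finite \<Rightarrow> complex) set" where
  TP_ee: "ee k \<in> TP"
| TP_add: "p \<in> TP \<Longrightarrow> q \<in> TP \<Longrightarrow> (\<lambda>x. p x + q x) \<in> TP"
| TP_cmult: "p \<in> TP \<Longrightarrow> (\<lambda>x. c * p x) \<in> TP"

lemma TP_const: "(\<lambda>x. c) \<in> TP"
  using TP_cmult[OF TP_ee[of 0], of c] by simp

lemma TP_cont_bdd: "p \<in> TP \<Longrightarrow> continuous_on UNIV p \<and> (\<exists>B. \<forall>x. norm (p x) \<le> B)"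
proof (induction rule: TP.induct)
  case (TP_ee k)
  then show ?case by (auto intro: continuous_ee)
next
  case (TP_add p q)
  then obtain B1 B2 where "\<forall>x. norm (p x) \<le> B1" "\<forall>x. norm (q x) \<le> B2" by auto
  then have "\<forall>x. norm (p x + q x) \<le> B1 + B2" by (meson add_mono norm_triangle_le)
  with TP_add show ?case by (auto intro: continuous_on_add)
next
  case (TP_cmult p c)
  then obtain B where "\<forall>x. norm (p x) \<le> B" by auto
  then have "\<forall>x. norm (c * p x) \<le> norm c * B" by (simp add: norm_mult mult_left_mono)
  with TP_cmult show ?case by (auto intro: continuous_on_mult continuous_on_const)
qed

lemma TP_mult_ee: "p \<in> TP \<Longrightarrow> (\<lambda>x. p x * ee l x) \<in> TP"
proof (induction rule: TP.induct)
  case (TP_ee k)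
  then show ?case using TP.TP_ee[of "k + l"] by (simp add: ee_add[abs_def])
next
  case (TP_add p q)
  then show ?case using TP.TP_add[OF TP_add.IH] by (simp add: distrib_right)
next
  case (TP_cmult p c)
  then show ?case using TP.TP_cmult[OF TP_cmult.IH, of c] by (simp add: mult.assoc)
qed

lemma TP_mult': "q \<in> TP \<Longrightarrow> p \<in> TP \<Longrightarrow> (\<lambda>x. p x * q x) \<in> TP"
proof (induction rule: TP.induct)
  case (TP_ee k)
  then show ?case by (rule TP_mult_ee)
next
  case (TP_add q1 q2)
  then show ?case using TP.TP_add[OF TP_add.IH] by (simp add: distrib_left)
next
  case (TP_cmult q c)
  then show ?case using TP.TP_cmult[OF TP_cmult.IH, of c] by (simp add: mult_ac)
qed

lemma TP_mult: "p \<in> TP \<Longrightarrow> q \<in> TP \<Longrightarrow> (\<lambda>x. p x * q x) \<in> TP"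
  using TP_mult' by blast

lemma TP_sum: "finite S \<Longrightarrow> (\<And>i. i \<in> S \<Longrightarrow> f i \<in> TP) \<Longrightarrow> (\<lambda>x. \<Sum>i\<in>S. f i x) \<in> TP"
proof (induction S rule: finite_induct)
  case empty
  then show ?case using TP_const[of 0] by simp
next
  case (insert a S)
  then show ?case using TP_add[of "f a" "\<lambda>x. \<Sum>i\<in>S. f i x"] by simp
qed

lemma TP_cos: "(\<lambda>x. complex_of_real (cos (x $ j - \<mu>))) \<in> TP"
proof -
  have "complex_of_real (cos (x $ j - \<mu>)) =
        exp (- \<i> * of_real \<mu>) / 2 * ee (axis j 1) x + exp (\<i> * of_real \<mu>) / 2 * ee (- axis j 1) x" for x
  proof -
    have "complex_of_real (cos (x $ j - \<mu>)) = cos (complex_of_real (x $ j - \<mu>))"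
      by (metis cos_of_real)
    also have "\<dots> = (exp (\<i> * complex_of_real (x $ j - \<mu>)) + exp (- (\<i> * complex_of_real (x $ j - \<mu>)))) / 2"
      by (rule cos_exp_eq)
    also have "exp (\<i> * complex_of_real (x $ j - \<mu>)) = exp (- \<i> * of_real \<mu>) * ee (axis j 1) x"
      by (simp add: ee_def dotk_axis algebra_simps flip: exp_add)
    also have "exp (- (\<i> * complex_of_real (x $ j - \<mu>))) = exp (\<i> * of_real \<mu>) * ee (- axis j 1) x"
      by (simp add: ee_def dotk_axis dotk_uminus algebra_simps flip: exp_add)
    finally show ?thesis by (simp add: add_divide_distrib)
  qed
  moreover have "(\<lambda>x. exp (- \<i> * of_real \<mu>) / 2 * ee (axis j 1) x + exp (\<i> * of_real \<mu>) / 2 * ee (- axis j 1) x) \<in> TP"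
    by (intro TP_add TP_cmult TP_ee)
  ultimately show ?thesis by simp
qed

lemma sum_Basis_cart: "(\<Sum>b\<in>(Basis::(real^'n) set). g b) = (\<Sum>j\<in>UNIV. g (axis j 1))"
proof -
  have "inj (\<lambda>j::'n. axis j (1::real))" by (auto intro: injI simp: axis_eq_axis)
  then show ?thesis unfolding Basis_cart_range by (simp add: sum.reindex)
qed

lemma bounded_linear_cart:
  fixes P :: "real^'n \<Rightarrow> real"
  assumes "bounded_linear P"
  shows "P y = (\<Sum>j\<in>UNIV. y $ j * P (axis j 1))"
proof -
  interpret linear P using assms bounded_linear.linear by blast
  have "P y = P (\<Sum>b\<in>Basis. (y \<bullet> b) *\<^sub>R b)" by (simp add: euclidean_representation)
  also have "\<dots> = (\<Sum>b\<in>Basis. (y \<bullet> b) * P b)" by (simp add: sum scale)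
  also have "\<dots> = (\<Sum>j\<in>UNIV. y $ j * P (axis j 1))" by (simp add: sum_Basis_cart inner_axis)
  finally show ?thesis .
qed

lemma TP_poly:
  fixes \<mu> :: "real^'d::finite"
  assumes "real_polynomial_function P"
  shows "(\<lambda>x. complex_of_real (P (\<chi> j. cos (x $ j - \<mu> $ j)))) \<in> TP"
  using assms
proof (induction rule: real_polynomial_function.induct)
  case (linear f)
  have "complex_of_real (f (\<chi> j. cos (x $ j - \<mu> $ j))) =
        (\<Sum>j\<in>UNIV. complex_of_real (f (axis j 1)) * complex_of_real (cos (x $ j - \<mu> $ j)))" for x
    by (subst bounded_linear_cart[OF linear]) (simp add: mult.commute)
  moreover have "(\<lambda>x. \<Sum>j\<in>UNIV. complex_of_real (f (axis j 1)) * complex_of_real (cos (x $ j - \<mu> $ j))) \<in> TP"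
    by (intro TP_sum TP_cmult TP_cos) auto
  ultimately show ?case by simp
next
  case (const c)
  then show ?case by (rule TP_const)
next
  case (add f g)
  then show ?case using TP_add[OF add.IH] by simp
next
  case (mult f g)
  then show ?case using TP_mult[OF mult.IH] by simp
qed


context
  fixes h :: "real^'d::finite \<Rightarrow> complex"
  assumes hint: "integrable TT h"
    and H0: "\<And>k. (LINT x|TT. h x * ee k x) = 0"
begin

lemma TP_integrable: "p \<in> TP \<Longrightarrow> integrable TT (\<lambda>x. h x * p x)"
  using TP_cont_bdd[of p] by (auto intro!: integrable_bdd_mult[OF hint] meas_TT_cont)

lemma TP_int0: "p \<in> TP \<Longrightarrow> (LINT x|TT. h x * p x) = 0"
proof (induction rule: TP.induct)
  case (TP_ee k)
  then show ?case by (rule H0)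
next
  case (TP_add p q)
  have "(LINT x|TT. h x * (p x + q x)) = (LINT x|TT. h x * p x) + (LINT x|TT. h x * q x)"
    unfolding distrib_left using TP_add.hyps by (intro Bochner_Integration.integral_add TP_integrable)
  with TP_add show ?case by simp
next
  case (TP_cmult p c)
  have "(LINT x|TT. h x * (c * p x)) = c * (LINT x|TT. h x * p x)"
    by (simp add: mult_ac)
  with TP_cmult show ?case by simp
qed

lemma approx_int0:
  fixes F :: "real^'d \<Rightarrow> real" and C :: "real^'d \<Rightarrow> real^'d" and K :: "(real^'d) set"
  assumes K: "compact K" and Fc: "continuous_on K F"
    and CK: "\<And>x. C x \<in> K" and Cc: "continuous_on UNIV C"
    and TPP: "\<And>P. real_polynomial_function P \<Longrightarrow> (\<lambda>x. complex_of_real (P (C x))) \<in> TP"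
  shows "(LINT x|TT. h x * complex_of_real (F (C x))) = 0"
proof -
  have FCc: "continuous_on UNIV (\<lambda>x. F (C x))"
    by (rule continuous_on_compose2[OF Fc Cc]) (use CK in auto)
  obtain B where B: "\<And>y. y \<in> K \<Longrightarrow> norm (F y) \<le> B"
    using compact_imp_bounded[OF compact_continuous_image[OF Fc K]] by (auto simp: bounded_iff)
  let ?I = "LINT x|TT. h x * complex_of_real (F (C x))"
  have intI: "integrable TT (\<lambda>x. h x * complex_of_real (F (C x)))"
    by (rule integrable_bdd_mult[OF hint, where B=B])
       (use B CK in \<open>auto intro!: meas_TT_cont continuous_intros FCc\<close>)
  define A where "A = (LINT x|TT. norm (h x))"
  have A0: "0 \<le> A" unfolding A_def by simp
  have "norm ?I \<le> 0 + e" if e: "e > 0" for e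
  proof -
    obtain P where P: "polynomial_function P" "\<And>y. y \<in> K \<Longrightarrow> norm (F y - P y) < e / (A + 1)"
      using Stone_Weierstrass_polynomial_function[OF K Fc, of "e / (A + 1)"] e A0 by auto
    have rP: "real_polynomial_function P" using P(1) by (simp add: real_polynomial_function_eq)
    have TPc: "(\<lambda>x. complex_of_real (P (C x))) \<in> TP" by (rule TPP[OF rP])
    have "?I = (LINT x|TT. h x * complex_of_real (F (C x))) - (LINT x|TT. h x * complex_of_real (P (C x)))"
      using TP_int0[OF TPc] by simp
    also have "\<dots> = (LINT x|TT. h x * complex_of_real (F (C x) - P (C x)))"
      by (subst Bochner_Integration.integral_diff[symmetric])
         (auto intro: intI TP_integrable[OF TPc] simp: right_diff_distrib)
    finally have eq: "?I = (LINT x|TT. h x * complex_of_real (F (C x) - P (C x)))" .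
    have intD: "integrable TT (\<lambda>x. h x * complex_of_real (F (C x) - P (C x)))"
      using Bochner_Integration.integrable_diff[OF intI TP_integrable[OF TPc]]
      by (simp add: right_diff_distrib)
    have "norm ?I \<le> (LINT x|TT. norm (h x) * (e / (A + 1)))"
      unfolding eq
    proof (rule Bochner_Integration.integral_norm_bound_integral[OF intD])
      show "integrable TT (\<lambda>x. norm (h x) * (e / (A + 1)))"
        using hint by (intro integrable_mult_left integrable_norm)
      fix x
      have "norm (F (C x) - P (C x)) \<le> e / (A + 1)" using P(2)[OF CK[of x]] by simp
      then show "norm (h x * complex_of_real (F (C x) - P (C x))) \<le> norm (h x) * (e / (A + 1))"
        unfolding norm_mult norm_of_real by (intro mult_left_mono) auto
    qed
    also have "\<dots> = A * (e / (A + 1))" by (simp add: A_def)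
    also have "\<dots> \<le> e"
    proof -
      have "A * (e / (A + 1)) = e * (A / (A + 1))" by simp
      also have "\<dots> \<le> e * 1" using A0 e by (intro mult_left_mono) auto
      finally show ?thesis by simp
    qed
    finally show ?thesis by simp
  qed
  then have "norm ?I \<le> 0" by (rule field_le_epsilon)
  then show ?thesis by simp
qed

end


lemma cos_box:
  assumes "0 \<le> a" "a < b" "b \<le> 2*pi" "0 \<le> t" "t \<le> 2*pi"
  shows "cos (t - (a+b)/2) > cos ((b-a)/2) \<longleftrightarrow> a < t \<and> t < b"
proof -
  define \<theta> where "\<theta> = t - (a+b)/2"
  define r where "r = (b-a)/2"
  have r0: "0 < r" "r \<le> pi" using assms by (auto simp: r_def)
  have th: "\<bar>\<theta>\<bar> \<le> 2*pi - r" unfolding \<theta>_def r_def abs_le_iff using assms by (auto simp: field_simps)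
  have iff: "(a < t \<and> t < b) \<longleftrightarrow> \<bar>\<theta>\<bar> < r" unfolding \<theta>_def r_def abs_less_iff by (auto simp: field_simps)
  have c: "cos \<theta> = cos \<bar>\<theta>\<bar>" by simp
  show ?thesis
    unfolding iff \<theta>_def[symmetric] r_def[symmetric] c
  proof
    assume "cos r < cos \<bar>\<theta>\<bar>"
    show "\<bar>\<theta>\<bar> < r"
    proof (rule ccontr)
      assume "\<not> \<bar>\<theta>\<bar> < r"
      then have rt: "r \<le> \<bar>\<theta>\<bar>" by simp
      have "cos \<bar>\<theta>\<bar> \<le> cos r"
      proof (cases "\<bar>\<theta>\<bar> \<le> pi")
        case True
        then show ?thesis using rt r0 by (intro cos_monotone_0_pi_le) auto
      next
        case False
        have "cos \<bar>\<theta>\<bar> = cos (2*pi - \<bar>\<theta>\<bar>)" by (simp add: cos_2pi_minus)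
        also have "\<dots> \<le> cos r" using False th r0 by (intro cos_monotone_0_pi_le) auto
        finally show ?thesis .
      qed
      with \<open>cos r < cos \<bar>\<theta>\<bar>\<close> show False by simp
    qed
  next
    assume "\<bar>\<theta>\<bar> < r"
    then show "cos r < cos \<bar>\<theta>\<bar>" using r0 by (intro cos_monotone_0_pi) auto
  qed
qed

lemma g_eventually:
  fixes s :: real
  shows "eventually (\<lambda>n. min 1 (max 0 (real n * s)) = (if s > 0 then 1 else 0)) sequentially"
proof (cases "s > 0")
  case True
  have "min 1 (max 0 (real n * s)) = 1" if "n \<ge> nat \<lceil>1/s\<rceil>" for n
  proof -
    have "1/s \<le> real n" using that by linarith
    then have "1 \<le> real n * s" using True by (simp add: field_simps)
    then show ?thesis by simp
  qed
  then show ?thesis using True unfolding eventually_sequentially by (intro exI[of _ "nat \<lceil>1/s\<rceil>"]) auto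
next
  case False
  then have "real n * s \<le> 0" for n by (simp add: mult_nonneg_nonpos)
  then have "min 1 (max 0 (real n * s)) = 0" for n by (simp add: max_absorb1)
  then show ?thesis using False by simp
qed

context
  fixes h :: "real^'d::finite \<Rightarrow> complex"
  assumes hint: "integrable TT h"
    and H0: "\<And>k. (LINT x|TT. h x * ee k x) = 0"
begin

lemma h_meas: "h \<in> borel_measurable TT"
  using hint by (rule borel_measurable_integrable)

lemma box_int0:
  fixes c e :: "real^'d"
  assumes c0: "\<And>j. 0 \<le> c$j" and ce: "\<And>j. c$j < e$j" and e2: "\<And>j. e$j \<le> 2*pi"
  shows "(LINT x|TT. indicator (box c e) x *\<^sub>R h x) = 0"
proof -
  define \<mu> :: "real^'d" where "\<mu> = (\<chi> j. (c$j + e$j)/2)"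
  define \<rho> where "\<rho> j = cos ((e$j - c$j)/2)" for j :: 'd
  define C where "C x = (\<chi> j. cos (x $ j - \<mu> $ j))" for x :: "real^'d"
  define g where "g n s = min 1 (max 0 (real n * s))" for n :: nat and s :: real
  define Fn where "Fn n y = (\<Prod>j\<in>UNIV. g n (y $ j - \<rho> j))" for n and y :: "real^'d"
  have Cc: "continuous_on UNIV C"
    unfolding C_def by (intro continuous_on_vec_lambda continuous_intros)
  have CK: "C x \<in> cbox (- 1) 1" for x
    by (simp add: C_def mem_box_cart)
  have Fnc: "continuous_on S (Fn n)" for n S
    unfolding Fn_def g_def by (intro continuous_intros)
  have g01: "0 \<le> g n s" "g n s \<le> 1" for n s by (auto simp: g_def)
  have Fn01: "0 \<le> Fn n y" "Fn n y \<le> 1" for n y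
    unfolding Fn_def using g01 by (auto intro: prod_nonneg prod_le_1)
  have int0: "(LINT x|TT. h x * complex_of_real (Fn n (C x))) = 0" for n
    by (rule approx_int0[OF hint H0 compact_cbox Fnc CK Cc])
       (unfold C_def, rule TP_poly)
  have FnC_c: "continuous_on UNIV (\<lambda>x. complex_of_real (Fn n (C x)))" for n
    by (intro continuous_on_of_real continuous_on_compose2[OF Fnc Cc]) auto
  have lim: "(\<lambda>n. LINT x|TT. h x * complex_of_real (Fn n (C x))) \<longlonglongrightarrow> (LINT x|TT. indicator (box c e) x *\<^sub>R h x)"
  proof (rule integral_dominated_convergence[where w="\<lambda>x. norm (h x)"])
    show "(\<lambda>x. indicator (box c e) x *\<^sub>R h x) \<in> borel_measurable TT"
      by (intro borel_measurable_scaleR meas_TT borel_measurable_indicator h_meas) simp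
    show "(\<lambda>x. h x * complex_of_real (Fn n (C x))) \<in> borel_measurable TT" for n
      by (intro borel_measurable_times h_meas meas_TT_cont FnC_c)
    show "integrable TT (\<lambda>x. norm (h x))" by (intro integrable_norm hint)
    show "AE x in TT. norm (h x * complex_of_real (Fn n (C x))) \<le> norm (h x)" for n
    proof (intro AE_I2)
      fix x
      have "norm (complex_of_real (Fn n (C x))) \<le> 1" using Fn01[of n "C x"] by simp
      then show "norm (h x * complex_of_real (Fn n (C x))) \<le> norm (h x)"
        unfolding norm_mult by (metis mult_left_mono mult.right_neutral norm_ge_zero)
    qed
    show "AE x in TT. (\<lambda>n. h x * complex_of_real (Fn n (C x))) \<longlonglongrightarrow> indicator (box c e) x *\<^sub>R h x"
    proof (intro AE_I2)
      fix x :: "real^'d" assume "x \<in> space TT"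
      then have xt: "x \<in> torus" by simp
      then have x02: "0 \<le> x $ j" "x $ j \<le> 2*pi" for j by (auto simp: torus_def mem_box_cart)
      define s where "s j = cos (x $ j - \<mu> $ j) - \<rho> j" for j :: 'd
      have ev: "eventually (\<lambda>n. \<forall>j\<in>UNIV. g n (s j) = (if s j > 0 then 1 else 0)) sequentially"
        by (intro eventually_ball_finite) (auto simp: g_def g_eventually)
      have pos_iff: "(\<forall>j. s j > 0) \<longleftrightarrow> x \<in> box c e"
      proof -
        have "s j > 0 \<longleftrightarrow> c$j < x$j \<and> x$j < e$j" for j
          using cos_box[OF c0 ce e2 x02(1) x02(2)]
          by (simp add: s_def \<rho>_def \<mu>_def)
        then show ?thesis by (simp add: mem_box_cart)
      qed
      have "eventually (\<lambda>n. h x * complex_of_real (Fn n (C x)) = indicator (box c e) x *\<^sub>R h x) sequentially"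
        using ev
      proof eventually_elim
        case (elim n)
        have "Fn n (C x) = (\<Prod>j\<in>UNIV. if s j > 0 then 1 else 0)"
          unfolding Fn_def using elim by (intro prod.cong refl) (simp add: C_def s_def)
        also have "\<dots> = indicator (box c e) x"
        proof (cases "x \<in> box c e")
          case True then show ?thesis using pos_iff by simp
        next
          case False
          then obtain j where "\<not> s j > 0" using pos_iff by auto
          then show ?thesis using False by (auto intro!: prod_zero)
        qed
        finally show ?case by (simp add: scaleR_conv_of_real mult.commute)
      qed
      then show "(\<lambda>n. h x * complex_of_real (Fn n (C x))) \<longlonglongrightarrow> indicator (box c e) x *\<^sub>R h x"
        by (rule tendsto_eventually)
    qed
  qed
  then show ?thesis using int0 by (simp add: LIMSEQ_const_iff)
qed

end


lemma AE_box0: "AE x in TT. x \<in> box 0 (\<chi> j. 2*pi :: real^'d::finite)"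
proof -
  have "(cbox 0 (\<chi> j. 2*pi) - box 0 (\<chi> j. 2*pi) :: (real^'d) set) \<in> null_sets lebesgue"
    using negligible_frontier_interval negligible_iff_null_sets by blast
  then have "AE x in lebesgue. x \<notin> (cbox 0 (\<chi> j. 2*pi) - box 0 (\<chi> j. 2*pi) :: (real^'d) set)"
    by (rule AE_not_in)
  then have "AE x in lebesgue. x \<in> torus \<longrightarrow> x \<in> box 0 (\<chi> j. 2*pi :: real^'d)"
    by eventually_elim (auto simp: torus_def)
  then show ?thesis by (subst AE_restrict_space_iff) simp_all
qed

context
  fixes h :: "real^'d::finite \<Rightarrow> complex"
  assumes hint: "integrable TT h"
    and H0: "\<And>k. (LINT x|TT. h x * ee k x) = 0"
begin

lemma ind_integrable: assumes "A \<in> sets borel" shows "integrable TT (\<lambda>x. indicator A x *\<^sub>R h x)"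
proof (rule Bochner_Integration.integrable_bound[where f=h])
  show "integrable TT h" by (rule hint)
  show "(\<lambda>x. indicator A x *\<^sub>R h x) \<in> borel_measurable TT"
    by (rule borel_measurable_scaleR[OF meas_TT[OF borel_measurable_indicator[OF assms]] h_meas[OF hint H0]])
  show "AE x in TT. norm (indicator A x *\<^sub>R h x) \<le> norm (h x)"
    by (intro AE_I2) (auto simp: indicator_def)
qed

lemma anybox_int0: "(LINT x|TT. indicator (box a b) x *\<^sub>R h x) = 0"
proof -
  define c :: "real^'d" where "c = (\<chi> j. max (a$j) 0)"
  define e :: "real^'d" where "e = (\<chi> j. min (b$j) (2*pi))"
  show ?thesis
  proof (cases "\<forall>j. c$j < e$j")
    case True
    have "(LINT x|TT. indicator (box a b) x *\<^sub>R h x) = (LINT x|TT. indicator (box c e) x *\<^sub>R h x)"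
    proof (rule integral_cong_AE)
      show "(\<lambda>x. indicator (box a b) x *\<^sub>R h x) \<in> borel_measurable TT"
        using ind_integrable[of "box a b"] by (simp add: borel_measurable_integrable)
      show "(\<lambda>x. indicator (box c e) x *\<^sub>R h x) \<in> borel_measurable TT"
        using ind_integrable[of "box c e"] by (simp add: borel_measurable_integrable)
      show "AE x in TT. indicator (box a b) x *\<^sub>R h x = indicator (box c e) x *\<^sub>R h x"
        using AE_box0
      proof eventually_elim
        case (elim x)
        then have "x \<in> box a b \<longleftrightarrow> x \<in> box c e"
          by (auto simp: mem_box_cart c_def e_def)
        then show ?case by (simp add: indicator_def)
      qed
    qed
    also have "\<dots> = 0"
      by (rule box_int0[OF hint H0]) (use True in \<open>auto simp: c_def e_def\<close>)
    finally show ?thesis .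
  next
    case False
    then obtain j where j: "e$j \<le> c$j" by (auto simp: not_less)
    have nb: "x \<notin> box a b" if "x \<in> torus" for x
    proof
      assume "x \<in> box a b"
      then have "a$j < x$j" "x$j < b$j" by (auto simp: mem_box_cart)
      moreover have "0 \<le> x$j" "x$j \<le> 2*pi" using that by (auto simp: torus_def mem_box_cart)
      ultimately show False using j pi_gt_zero by (auto simp: c_def e_def min_le_iff_disj le_max_iff_disj)
    qed
    have "(LINT x|TT. indicator (box a b) x *\<^sub>R h x) = (LINT x|TT. (0::real) *\<^sub>R h x)"
      by (rule Bochner_Integration.integral_cong[OF refl]) (use nb in auto)
    then show ?thesis by simp
  qed
qed

lemma whole_int0: "(LINT x|TT. h x) = 0"
  using H0[of 0] by simp

lemma borel_int0:
  assumes "A \<in> sets borel"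
  shows "(LINT x|TT. indicator A x *\<^sub>R h x) = 0"
proof -
  let ?G = "range (\<lambda>(a, b). box a b :: (real^'d) set)"
  have sb: "sets borel = sigma_sets UNIV ?G"
    by (subst borel_eq_box) (simp add: sets_measure_of)
  have Gst: "Int_stable ?G"
    unfolding Int_stable_def by (auto simp: box_Int_box)
  have Asig: "A \<in> sigma_sets UNIV ?G" using assms sb by simp
  show ?thesis
  proof (rule sigma_sets_induct_disjoint[OF Gst _ Asig, where P="\<lambda>A. (LINT x|TT. indicator A x *\<^sub>R h x) = 0"])
    show "?G \<subseteq> Pow UNIV" by simp
  next
    fix A assume "A \<in> ?G"
    then show "(LINT x|TT. indicator A x *\<^sub>R h x) = 0" using anybox_int0 by auto
  next
    show "(LINT x|TT. indicator {} x *\<^sub>R h x) = 0" by simp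
  next
    fix A assume A1: "A \<in> sigma_sets UNIV ?G" and A2: "(LINT x|TT. indicator A x *\<^sub>R h x) = 0"
    have Ab: "A \<in> sets borel" using A1 sb by simp
    have "(LINT x|TT. indicator (UNIV - A) x *\<^sub>R h x) = (LINT x|TT. h x - indicator A x *\<^sub>R h x)"
      by (intro Bochner_Integration.integral_cong refl) (auto simp: indicator_def)
    also have "\<dots> = (LINT x|TT. h x) - (LINT x|TT. indicator A x *\<^sub>R h x)"
      by (intro Bochner_Integration.integral_diff hint ind_integrable Ab)
    finally show "(LINT x|TT. indicator (UNIV - A) x *\<^sub>R h x) = 0" using A2 whole_int0 by simp
  next
    fix A :: "nat \<Rightarrow> (real^'d) set"
    assume 51: "disjoint_family A" and 52: "range A \<subseteq> sigma_sets UNIV ?G"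
      and 53: "\<And>i. (LINT x|TT. indicator (A i) x *\<^sub>R h x) = 0"
    note 5 = 51 52 53
    have Ab: "A i \<in> sets borel" for i using 5(2) sb by auto
    have fin: "(LINT x|TT. indicator (\<Union>i<n. A i) x *\<^sub>R h x) = 0" for n
    proof (induction n)
      case 0
      then show ?case by simp
    next
      case (Suc n)
      have disj: "(\<Union>i<n. A i) \<inter> A n = {}"
      proof -
        { fix x i assume "i < n" "x \<in> A n" "x \<in> A i"
          then have "i \<noteq> n" by simp
          then have False using 5(1) \<open>x \<in> A n\<close> \<open>x \<in> A i\<close> unfolding disjoint_family_on_def by blast }
        then show ?thesis by blast
      qed
      have "(LINT x|TT. indicator (\<Union>i<Suc n. A i) x *\<^sub>R h x) =
            (LINT x|TT. indicator (\<Union>i<n. A i) x *\<^sub>R h x + indicator (A n) x *\<^sub>R h x)"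
      proof (intro Bochner_Integration.integral_cong refl)
        fix x
        have "(\<Union>i<Suc n. A i) = (\<Union>i<n. A i) \<union> A n" by (auto simp: lessThan_Suc)
        then show "indicator (\<Union>i<Suc n. A i) x *\<^sub>R h x = indicator (\<Union>i<n. A i) x *\<^sub>R h x + indicator (A n) x *\<^sub>R h x"
          using disj by (auto simp: indicator_def)
      qed
      also have "\<dots> = (LINT x|TT. indicator (\<Union>i<n. A i) x *\<^sub>R h x) + (LINT x|TT. indicator (A n) x *\<^sub>R h x)"
        by (intro Bochner_Integration.integral_add ind_integrable Ab sets.finite_UN) auto
      finally show ?case using Suc.IH 5(3)[of n] by simp
    qed
    have "(\<lambda>n. LINT x|TT. indicator (\<Union>i<n. A i) x *\<^sub>R h x) \<longlonglongrightarrow> (LINT x|TT. indicator (\<Union>i. A i) x *\<^sub>R h x)"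
    proof (rule integral_dominated_convergence[where w="\<lambda>x. norm (h x)"])
      show "(\<lambda>x. indicator (\<Union>i. A i) x *\<^sub>R h x) \<in> borel_measurable TT"
        using ind_integrable[of "\<Union>i. A i"] Ab by (auto simp: borel_measurable_integrable)
      show "(\<lambda>x. indicator (\<Union>i<n. A i) x *\<^sub>R h x) \<in> borel_measurable TT" for n
        using ind_integrable[of "\<Union>i<n. A i"] Ab by (auto simp: borel_measurable_integrable)
      show "integrable TT (\<lambda>x. norm (h x))" by (intro integrable_norm hint)
      show "AE x in TT. (\<lambda>n. indicator (\<Union>i<n. A i) x *\<^sub>R h x) \<longlonglongrightarrow> indicator (\<Union>i. A i) x *\<^sub>R h x"
        by (intro AE_I2 tendsto_scaleR LIMSEQ_indicator_UN tendsto_const)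
      show "AE x in TT. norm (indicator (\<Union>i<n. A i) x *\<^sub>R h x) \<le> norm (h x)" for n
        by (intro AE_I2) (auto simp: indicator_def)
    qed
    then show "(LINT x|TT. indicator (\<Union>i. A i) x *\<^sub>R h x) = 0" using fin by (simp add: LIMSEQ_const_iff)
  qed
qed

lemma all_sets_int0:
  assumes "A \<in> sets TT"
  shows "set_lebesgue_integral TT A h = 0"
proof -
  obtain B where B: "B \<in> sets lebesgue" "A = torus \<inter> B"
    using assms by (auto simp: sets_restrict_space)
  obtain S N N' where SN: "B = S \<union> N" "N \<subseteq> N'" "N' \<in> null_sets lborel" "S \<in> sets lborel"
    using B(1) by (rule sets_completionE)
  have "AE x in lebesgue. x \<notin> N'"
    using SN(3) by (intro AE_completion AE_not_in)
  then have "AE x in TT. x \<notin> N'"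
    by (subst AE_restrict_space_iff) (auto elim: eventually_mono)
  moreover have "AE x in TT. x \<in> torus" by (rule AE_I2) simp
  ultimately have ae: "AE x in TT. indicator A x *\<^sub>R h x = indicator S x *\<^sub>R h x"
    by eventually_elim (use B SN in \<open>auto simp: indicator_def\<close>)
  have "set_lebesgue_integral TT A h = (LINT x|TT. indicator A x *\<^sub>R h x)"
    by (simp add: set_lebesgue_integral_def)
  also have "\<dots> = (LINT x|TT. indicator S x *\<^sub>R h x)"
  proof (rule integral_cong_AE[OF _ _ ae])
    show "(\<lambda>x. indicator A x *\<^sub>R h x) \<in> borel_measurable TT"
      using assms by (intro borel_measurable_scaleR borel_measurable_indicator h_meas[OF hint H0])
    show "(\<lambda>x. indicator S x *\<^sub>R h x) \<in> borel_measurable TT"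
      using ind_integrable[of S] SN(4) by (simp add: borel_measurable_integrable)
  qed
  also have "\<dots> = 0" using SN(4) by (intro borel_int0) simp
  finally show ?thesis .
qed

lemma h_AE0: "AE x in TT. h x = 0"
proof (rule sigma_finite_measure.density_zero)
  show "sigma_finite_measure TT" using fin_TT unfolding finite_measure_def by blast
  show "integrable TT h" by (rule hint)
  show "\<And>A. A \<in> sets TT \<Longrightarrow> set_lebesgue_integral TT A h = 0" by (rule all_sets_int0)
qed

end

lemma uniqueness:
  fixes h :: "real^'d::finite \<Rightarrow> complex"
  assumes hint: "integrable TT h" and F0: "\<And>k. fourier h k = 0"
  shows "AE x in TT. h x = 0"
proof (rule h_AE0[OF hint])
  fix k :: "int^'d"
  have "fourier h (-k) = 0" by (rule F0)
  then show "(LINT x|TT. h x * ee k x) = 0" by (simp add: fourier_ee)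
qed


theorem mainTheorem10:
  shows "(\<forall>f :: real^'d::finite \<Rightarrow> complex. inW2inf f \<longrightarrow>
            (\<forall>k. (\<exists>i. \<bar>k $ i\<bar> \<ge> 2) \<longrightarrow> fourier f k = 0) \<and>
            (SUP m\<in>(posidx :: (nat^'d) set). sob_norm m f) ^ 2 =
              (\<Sum>k\<in>lowfreq. (1 + (\<Sum>j\<in>UNIV. real_of_int \<bar>k $ j\<bar>)) * (cmod (fourier f k))^2))
        \<and> (\<forall>f g :: real^'d \<Rightarrow> complex. \<forall>c :: complex.
            inW2inf f \<longrightarrow> inW2inf g \<longrightarrow> inW2inf (\<lambda>x. f x + g x) \<and> inW2inf (\<lambda>x. c * f x))
        \<and> (\<forall>f g :: real^'d \<Rightarrow> complex. inW2inf f \<longrightarrow> inW2inf g \<longrightarrow>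
            ((\<forall>k\<in>lowfreq. fourier f k = fourier g k) \<longleftrightarrow>
             (AE x in lebesgue_on torus. f x = g x)))
        \<and> (\<forall>a :: int^'d \<Rightarrow> complex. \<exists>f. inW2inf f \<and> (\<forall>k\<in>lowfreq. fourier f k = a k))
        \<and> card (lowfreq :: (int^'d) set) = 3 ^ CARD('d)"
proof (intro conjI allI impI)
  fix f :: "real^'d \<Rightarrow> complex"
  assume f: "inW2inf f"
  have LFf: "LF f" by (rule inW2inf_LF[OF f])
  show "\<And>k. \<exists>i. \<bar>k $ i\<bar> \<ge> 2 \<Longrightarrow> fourier f k = 0"
    using LFf by (auto simp: LF_def not_lowfreq_iff)
  have "(SUP m\<in>(posidx :: (nat^'d) set). sob_norm m f) = (SUP m\<in>(posidx :: (nat^'d) set). sqrt (Sq f))"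
    by (rule SUP_cong[OF refl]) (rule LF_sob_norm[OF LFf])
  also have "\<dots> = sqrt (Sq f)"
    using posidx_ne by (intro cSUP_const) auto
  finally show "(SUP m\<in>(posidx :: (nat^'d) set). sob_norm m f) ^ 2 =
              (\<Sum>k\<in>lowfreq. (1 + (\<Sum>j\<in>UNIV. real_of_int \<bar>k $ j\<bar>)) * (cmod (fourier f k))^2)"
    using Sq_nonneg[of f] by (simp add: Sq_def)
next
  fix f g :: "real^'d \<Rightarrow> complex" and c :: complex
  assume "inW2inf f" "inW2inf g"
  then show "inW2inf (\<lambda>x. f x + g x)" by (rule inW2inf_add)
  show "inW2inf (\<lambda>x. c * f x)" by (rule inW2inf_cmult) fact
next
  fix f g :: "real^'d \<Rightarrow> complex"
  assume f: "inW2inf f" and g: "inW2inf g"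
  have Lf: "L2T f" and Lg: "L2T g" using f g by (auto intro: inW2inf_L2T)
  show "(\<forall>k\<in>lowfreq. fourier f k = fourier g k) \<longleftrightarrow> (AE x in lebesgue_on torus. f x = g x)"
  proof
    assume eq: "\<forall>k\<in>lowfreq. fourier f k = fourier g k"
    have "AE x in TT. f x - g x = 0"
    proof (rule uniqueness)
      show "integrable TT (\<lambda>x. f x - g x)"
        using L2T_integrable[OF Lf] L2T_integrable[OF Lg] by (rule Bochner_Integration.integrable_diff)
      fix k :: "int^'d"
      have "fourier (\<lambda>x. f x - g x) k = fourier f k - fourier g k"
        by (rule fourier_diff[OF L2T_integrable[OF Lf] L2T_integrable[OF Lg]])
      also have "\<dots> = 0"
        using eq inW2inf_LF[OF f] inW2inf_LF[OF g] by (cases "k \<in> lowfreq") (auto simp: LF_def)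
      finally show "fourier (\<lambda>x. f x - g x) k = 0" .
    qed
    then show "AE x in lebesgue_on torus. f x = g x" by eventually_elim simp
  next
    assume "AE x in lebesgue_on torus. f x = g x"
    then show "\<forall>k\<in>lowfreq. fourier f k = fourier g k"
      using fourier_AE[OF Lf Lg] by blast
  qed
next
  fix a :: "int^'d \<Rightarrow> complex"
  show "\<exists>f. inW2inf f \<and> (\<forall>k\<in>lowfreq. fourier f k = a k)" by (rule trig_exists)
next
  show "card (lowfreq :: (int^'d) set) = 3 ^ CARD('d)" by (rule card_lowfreq)
qed

end
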